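(* Let $\mathcal{X}=({\bm X},m^{\bm X}_\bullet,\nu^{\bm X})$, $\mathcal{Y}=({\bm Y},m^{\bm Y}_\bullet,\nu^{\bm Y})$ be finite Markov chains, $C:{\bm X}\times{\bm Y}\to\mathbb{R}_+$ a cost matrix, $\delta\in[0,1]$ and $k\in\mathbb{N}$. Define matrices $C^{\delta,(l)}$, $l=0,\dots,k$, by $C^{\delta,(0)}_{ij}=C_{ij}$ and $C^{\delta,(l+1)}_{ij}=\delta C_{ij}+(1-\delta)\,d_{\mathrm W}(m^{\bm X}_i,m^{\bm Y}_j;C^{\delta,(l)})$ for $i\in{\bm X},j\in{\bm Y}$. Then $d^{\delta,(k)}_{\mathrm{WL}}(\mathcal{X},\mathcal{Y};C)=d_{\mathrm W}(\nu^{\bm X},\nu^{\bm Y};C^{\delta,(k)})$.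
   Context: A finite Markov chain consists of a finite set, a transition kernel $m^{\bm X}_\bullet:{\bm X}\to\mathcal{P}({\bm X})$ and an initial distribution. For $\alpha\in\mathcal{P}({\bm X}),\beta\in\mathcal{P}({\bm Y})$ and $D:{\bm X}\times{\bm Y}\to\mathbb{R}_+$, $d_{\mathrm W}(\alpha,\beta;D)=\inf_{(X,Y)\in\mathcal{C}(\alpha,\beta)}\mathbb{E}\,D(X,Y)$, where $\mathcal{C}(\alpha,\beta)$ is the set of couplings. A Markovian coupling between $\mathcal{X}$ and $\mathcal{Y}$ is a (possibly time-inhomogeneous) Markov chain $(X_t,Y_t)_{t\in\mathbb{N}}$ on ${\bm X}\times{\bm Y}$ with $\mathrm{law}(X_0,Y_0)\in\mathcal{C}(\nu^{\bm X},\nu^{\bm Y})$ and, for all $t,x,y$, the conditional law of $(X_{t+1},Y_{t+1})$ given $(X_t,Y_t)=(x,y)$ in $\mathcal{C}(m^{\bm X}_x,m^{\bm Y}_y)$; $\Pi(\mathcal{X},\mathcal{Y})$ is their set. $d^{\delta,(k)}_{\mathrm{WL}}(\mathcal{X},\mathcal{Y};C)=\inf_{\Pi(\mathcal{X},\mathcal{Y})}\mathbb{E}\big[\sum_{t=0}^{k-1}\delta(1-\delta)^tC(X_t,Y_t)+(1-\delta)^kC(X_k,Y_k)\big]$. *)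

theory Defs
  imports "HOL-Probability.Probability"
begin

definition couplings :: "'x pmf \<Rightarrow> 'y pmf \<Rightarrow> ('x \<times> 'y) pmf set" where
  "couplings \<alpha> \<beta> = {p. map_pmf fst p = \<alpha> \<and> map_pmf snd p = \<beta>}"

definition dW :: "'x pmf \<Rightarrow> 'y pmf \<Rightarrow> ('x \<Rightarrow> 'y \<Rightarrow> real) \<Rightarrow> real" where
  "dW \<alpha> \<beta> D = (INF p \<in> couplings \<alpha> \<beta>. measure_pmf.expectation p (\<lambda>(x, y). D x y))"

text \<open>A Markovian coupling is given by an initial law pi0 on X x Y and
  time-dependent transition kernels K t on X x Y (possibly time-inhomogeneous).\<close>
definition markov_couplings ::
  "('x \<Rightarrow> 'x pmf) \<Rightarrow> 'x pmf \<Rightarrow> ('y \<Rightarrow> 'y pmf) \<Rightarrow> 'y pmf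
   \<Rightarrow> ((('x \<times> 'y) pmf) \<times> (nat \<Rightarrow> 'x \<times> 'y \<Rightarrow> ('x \<times> 'y) pmf)) set" where
  "markov_couplings mX nuX mY nuY =
     {(\<pi>0, K). \<pi>0 \<in> couplings nuX nuY \<and>
               (\<forall>t x y. K t (x, y) \<in> couplings (mX x) (mY y))}"

text \<open>Law of the path ((X_0,Y_0), ..., (X_n,Y_n)) of the Markov chain with initial
  law pi0 and kernels K, as a distribution on lists of length n+1.\<close>
primrec path_law :: "'s pmf \<Rightarrow> (nat \<Rightarrow> 's \<Rightarrow> 's pmf) \<Rightarrow> nat \<Rightarrow> 's list pmf" where
  "path_law \<pi>0 K 0 = map_pmf (\<lambda>s. [s]) \<pi>0"
| "path_law \<pi>0 K (Suc n) =
     bind_pmf (path_law \<pi>0 K n) (\<lambda>p. map_pmf (\<lambda>s. p @ [s]) (K n (last p)))"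

definition dWL ::
  "real \<Rightarrow> nat \<Rightarrow> ('x \<Rightarrow> 'x pmf) \<Rightarrow> 'x pmf \<Rightarrow> ('y \<Rightarrow> 'y pmf) \<Rightarrow> 'y pmf
   \<Rightarrow> ('x \<Rightarrow> 'y \<Rightarrow> real) \<Rightarrow> real" where
  "dWL \<delta> k mX nuX mY nuY C =
     (INF c \<in> markov_couplings mX nuX mY nuY.
        measure_pmf.expectation (path_law (fst c) (snd c) k)
          (\<lambda>p. (\<Sum>t<k. \<delta> * (1 - \<delta>) ^ t * C (fst (p ! t)) (snd (p ! t)))
               + (1 - \<delta>) ^ k * C (fst (p ! k)) (snd (p ! k))))"

primrec Cdelta ::
  "real \<Rightarrow> ('x \<Rightarrow> 'x pmf) \<Rightarrow> ('y \<Rightarrow> 'y pmf) \<Rightarrow> ('x \<Rightarrow> 'y \<Rightarrow> real) \<Rightarrow> nat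
   \<Rightarrow> 'x \<Rightarrow> 'y \<Rightarrow> real" where
  "Cdelta \<delta> mX mY C 0 = C"
| "Cdelta \<delta> mX mY C (Suc l) =
     (\<lambda>i j. \<delta> * C i j + (1 - \<delta>) * dW (mX i) (mY j) (Cdelta \<delta> mX mY C l))"

end

theory Submission
  imports Defs
begin

lemma integral_bind_pmf_real:
  fixes f :: "'b \<Rightarrow> real"
  assumes "\<And>y. \<bar>f y\<bar> \<le> B"
  shows "measure_pmf.expectation (bind_pmf M N) f
         = measure_pmf.expectation M (\<lambda>x. measure_pmf.expectation (N x) f)"
  using measurable_measure_pmf[of N] assms
  unfolding measure_pmf_bind
  by (intro integral_bind[where K="count_space UNIV" and B=B and B'=1]) auto

lemma path_law_nonempty:
  "p \<in> set_pmf (path_law \<pi>0 K n) \<Longrightarrow> p \<noteq> []"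
  by (induction n arbitrary: p) auto

lemma path_law_front:
  "path_law \<pi>0 K (Suc n) =
     bind_pmf \<pi>0 (\<lambda>s. map_pmf (Cons s) (path_law (K 0 s) (\<lambda>t. K (Suc t)) n))"
proof (induction n)
  case 0
  then show ?case
    by (simp add: bind_map_pmf map_pmf_comp)
next
  case (Suc n)
  have "path_law \<pi>0 K (Suc (Suc n)) =
     bind_pmf (path_law \<pi>0 K (Suc n)) (\<lambda>p. map_pmf (\<lambda>s. p @ [s]) (K (Suc n) (last p)))"
    by simp
  also have "\<dots> = bind_pmf \<pi>0 (\<lambda>s. bind_pmf (path_law (K 0 s) (\<lambda>t. K (Suc t)) n)
        (\<lambda>p. map_pmf (\<lambda>s'. (s # p) @ [s']) (K (Suc n) (last (s # p)))))"
    by (subst Suc) (simp add: bind_assoc_pmf bind_map_pmf del: path_law.simps)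
  also have "\<dots> = bind_pmf \<pi>0 (\<lambda>s. bind_pmf (path_law (K 0 s) (\<lambda>t. K (Suc t)) n)
        (\<lambda>p. map_pmf (Cons s) (map_pmf (\<lambda>s'. p @ [s']) (K (Suc n) (last p)))))"
    by (intro bind_pmf_cong refl) (auto simp: map_pmf_comp dest: path_law_nonempty)
  also have "\<dots> = bind_pmf \<pi>0 (\<lambda>s. map_pmf (Cons s) (path_law (K 0 s) (\<lambda>t. K (Suc t)) (Suc n)))"
    by (simp add: map_bind_pmf)
  finally show ?case .
qed

definition cost :: "real \<Rightarrow> ('x \<Rightarrow> 'y \<Rightarrow> real) \<Rightarrow> nat \<Rightarrow> ('x \<times> 'y) list \<Rightarrow> real" where
  "cost \<delta> C k p = (\<Sum>t<k. \<delta> * (1 - \<delta>) ^ t * C (fst (p ! t)) (snd (p ! t)))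
               + (1 - \<delta>) ^ k * C (fst (p ! k)) (snd (p ! k))"

lemma cost_Cons:
  "cost \<delta> C (Suc k) (s # p) = \<delta> * C (fst s) (snd s) + (1 - \<delta>) * cost \<delta> C k p"
  unfolding cost_def sum.lessThan_Suc_shift
  by (simp add: sum_distrib_left algebra_simps)

lemma cost_bounds:
  fixes C :: "'x::finite \<Rightarrow> 'y::finite \<Rightarrow> real"
  assumes C: "\<And>x y. C x y \<ge> 0" and d: "0 \<le> \<delta>" "\<delta> \<le> 1"
  shows "0 \<le> cost \<delta> C k p \<and> cost \<delta> C k p \<le> real (Suc k) * (\<Sum>x\<in>UNIV. \<Sum>y\<in>UNIV. C x y)"
proof -
  define B where "B = (\<Sum>x\<in>UNIV. \<Sum>y\<in>UNIV. C x y)"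
  have CB: "C x y \<le> B" for x y
  proof -
    have "C x y \<le> (\<Sum>y\<in>UNIV. C x y)" by (rule member_le_sum) (auto simp: C)
    also have "\<dots> \<le> B" unfolding B_def by (rule member_le_sum) (auto simp: C sum_nonneg)
    finally show ?thesis .
  qed
  have coef: "0 \<le> \<delta> * (1 - \<delta>) ^ t" "\<delta> * (1 - \<delta>) ^ t \<le> 1" "0 \<le> (1 - \<delta>) ^ t" "(1 - \<delta>) ^ t \<le> 1" for t
    using d by (auto simp: mult_le_one power_le_one)
  have tb: "0 \<le> a * C x y \<and> a * C x y \<le> B" if "0 \<le> a" "a \<le> 1" for a x y
    using that C[of x y] CB[of x y] by (metis mult_le_one mult_nonneg_nonneg mult_right_mono order_trans mult_1)
  have "(\<Sum>t<k. \<delta> * (1 - \<delta>) ^ t * C (fst (p ! t)) (snd (p ! t))) \<le> (\<Sum>t<k. B)"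
    by (intro sum_mono) (use tb coef in blast)
  moreover have "0 \<le> (\<Sum>t<k. \<delta> * (1 - \<delta>) ^ t * C (fst (p ! t)) (snd (p ! t)))"
    by (intro sum_nonneg) (use tb coef in blast)
  moreover have "0 \<le> (1 - \<delta>) ^ k * C (fst (p ! k)) (snd (p ! k))"
    "(1 - \<delta>) ^ k * C (fst (p ! k)) (snd (p ! k)) \<le> B" using tb coef by blast+
  ultimately show ?thesis unfolding cost_def B_def[symmetric] by (simp add: algebra_simps)
qed


lemma couplings_pair: "pair_pmf \<alpha> \<beta> \<in> couplings \<alpha> \<beta>"
  by (simp add: couplings_def map_fst_pair_pmf map_snd_pair_pmf)

lemma exp_nonneg:
  fixes D :: "'a \<Rightarrow> 'b \<Rightarrow> real"
  assumes "\<And>x y. D x y \<ge> 0"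
  shows "0 \<le> measure_pmf.expectation p (\<lambda>(x, y). D x y)"
  by (intro integral_nonneg_AE AE_I2) (simp add: assms case_prod_beta)

lemma dW_nonneg:
  assumes "\<And>x y. D x y \<ge> 0"
  shows "dW \<alpha> \<beta> D \<ge> 0"
  unfolding dW_def
  using couplings_pair[of \<alpha> \<beta>] assms
  by (intro cINF_greatest) (auto intro!: exp_nonneg)

lemma dW_bdd:
  fixes D :: "'a \<Rightarrow> 'b \<Rightarrow> real"
  assumes "\<And>x y. D x y \<ge> 0"
  shows "bdd_below ((\<lambda>p. measure_pmf.expectation p (\<lambda>(x, y). D x y)) ` couplings \<alpha> \<beta>)"
  by (intro bdd_belowI[where m=0]) (auto intro!: exp_nonneg assms)

lemma dW_le:
  assumes "\<And>x y. D x y \<ge> 0" "p \<in> couplings \<alpha> \<beta>"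
  shows "dW \<alpha> \<beta> D \<le> measure_pmf.expectation p (\<lambda>(x, y). D x y)"
  unfolding dW_def by (rule cINF_lower[OF dW_bdd[OF assms(1)] assms(2)])

lemma Cdelta_nonneg:
  assumes C: "\<And>x y. C x y \<ge> 0" and d: "0 \<le> \<delta>" "\<delta> \<le> 1"
  shows "Cdelta \<delta> mX mY C l x y \<ge> 0"
proof (induction l arbitrary: x y)
  case 0 then show ?case using C by simp
next
  case (Suc l)
  have "dW (mX x) (mY y) (Cdelta \<delta> mX mY C l) \<ge> 0" by (rule dW_nonneg) (rule Suc)
  then show ?case using C[of x y] d by simp
qed

lemma fin_integrable:
  fixes f :: "'a::finite \<Rightarrow> real"
  shows "integrable (measure_pmf M) f"
  by (rule integrable_measure_pmf_finite) simp

lemma cost_integrable: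
  fixes C :: "'x::finite \<Rightarrow> 'y::finite \<Rightarrow> real"
  assumes C: "\<And>x y. C x y \<ge> 0" and d: "0 \<le> \<delta>" "\<delta> \<le> 1"
  shows "integrable (measure_pmf M) (cost \<delta> C k)"
  using cost_bounds[where C=C and \<delta>=\<delta>, OF assms]
  by (intro measure_pmf.integrable_const_bound[where B="real (Suc k) * (\<Sum>x\<in>UNIV. \<Sum>y\<in>UNIV. C x y)"]) auto

lemma exp_affine:
  fixes f :: "'a \<Rightarrow> real"
  assumes "integrable (measure_pmf M) f"
  shows "measure_pmf.expectation M (\<lambda>x. a + b * f x) = a + b * measure_pmf.expectation M f"
  using assms by simp

lemma step_eq:
  fixes C :: "'x::finite \<Rightarrow> 'y::finite \<Rightarrow> real"
  assumes C: "\<And>x y. C x y \<ge> 0" and d: "0 \<le> \<delta>" "\<delta> \<le> 1"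
  shows "measure_pmf.expectation (path_law \<pi>0 K (Suc k)) (cost \<delta> C (Suc k)) =
    measure_pmf.expectation \<pi>0 (\<lambda>s. \<delta> * C (fst s) (snd s) + (1 - \<delta>) *
        measure_pmf.expectation (path_law (K 0 s) (\<lambda>t. K (Suc t)) k) (cost \<delta> C k))"
proof -
  have "measure_pmf.expectation (path_law \<pi>0 K (Suc k)) (cost \<delta> C (Suc k)) =
    measure_pmf.expectation \<pi>0 (\<lambda>s. measure_pmf.expectation
       (map_pmf (Cons s) (path_law (K 0 s) (\<lambda>t. K (Suc t)) k)) (cost \<delta> C (Suc k)))"
    unfolding path_law_front
    using cost_bounds[where C=C and \<delta>=\<delta>, OF assms, where k="Suc k"]
    by (intro integral_bind_pmf_real[where B="real (Suc (Suc k)) * (\<Sum>x\<in>UNIV. \<Sum>y\<in>UNIV. C x y)"]) auto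
  also have "\<dots> = measure_pmf.expectation \<pi>0 (\<lambda>s. \<delta> * C (fst s) (snd s) + (1 - \<delta>) *
        measure_pmf.expectation (path_law (K 0 s) (\<lambda>t. K (Suc t)) k) (cost \<delta> C k))"
    by (simp add: cost_Cons exp_affine cost_integrable[where C=C and \<delta>=\<delta>, OF assms])
  finally show ?thesis .
qed


lemma lower_bound:
  fixes C :: "'x::finite \<Rightarrow> 'y::finite \<Rightarrow> real"
    and mX :: "'x \<Rightarrow> 'x pmf" and mY :: "'y \<Rightarrow> 'y pmf"
  assumes C: "\<And>x y. C x y \<ge> 0" and d: "0 \<le> \<delta>" "\<delta> \<le> 1"
  shows "(\<forall>t x y. K t (x, y) \<in> couplings (mX x) (mY y)) \<Longrightarrow>
    measure_pmf.expectation \<pi>0 (\<lambda>s. Cdelta \<delta> mX mY C k (fst s) (snd s))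
    \<le> measure_pmf.expectation (path_law \<pi>0 K k) (cost \<delta> C k)"
proof (induction k arbitrary: \<pi>0 K)
  case 0
  then show ?case by (simp add: cost_def)
next
  case (Suc k)
  have Cn: "\<And>l x y. 0 \<le> Cdelta \<delta> mX mY C l x y" by (rule Cdelta_nonneg) (use C d in auto)
  have "measure_pmf.expectation \<pi>0 (\<lambda>s. Cdelta \<delta> mX mY C (Suc k) (fst s) (snd s))
     \<le> measure_pmf.expectation \<pi>0 (\<lambda>s. \<delta> * C (fst s) (snd s) + (1 - \<delta>) *
        measure_pmf.expectation (path_law (K 0 s) (\<lambda>t. K (Suc t)) k) (cost \<delta> C k))"
  proof (rule integral_mono[OF fin_integrable fin_integrable])
    fix s :: "'x \<times> 'y"
    have cp: "K 0 s \<in> couplings (mX (fst s)) (mY (snd s))"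
      using Suc.prems by (metis prod.collapse)
    have "dW (mX (fst s)) (mY (snd s)) (Cdelta \<delta> mX mY C k)
        \<le> measure_pmf.expectation (K 0 s) (\<lambda>(x, y). Cdelta \<delta> mX mY C k x y)"
      by (rule dW_le[OF Cn cp])
    also have "\<dots> = measure_pmf.expectation (K 0 s) (\<lambda>s. Cdelta \<delta> mX mY C k (fst s) (snd s))"
      by (simp add: split_beta')
    also have "\<dots> \<le> measure_pmf.expectation (path_law (K 0 s) (\<lambda>t. K (Suc t)) k) (cost \<delta> C k)"
      using Suc.prems by (intro Suc.IH) auto
    finally have "dW (mX (fst s)) (mY (snd s)) (Cdelta \<delta> mX mY C k)
        \<le> measure_pmf.expectation (path_law (K 0 s) (\<lambda>t. K (Suc t)) k) (cost \<delta> C k)" .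
    then show "Cdelta \<delta> mX mY C (Suc k) (fst s) (snd s) \<le> \<delta> * C (fst s) (snd s) + (1 - \<delta>) *
        measure_pmf.expectation (path_law (K 0 s) (\<lambda>t. K (Suc t)) k) (cost \<delta> C k)"
      using d by (simp add: mult_left_mono)
  qed
  also have "\<dots> = measure_pmf.expectation (path_law \<pi>0 K (Suc k)) (cost \<delta> C (Suc k))"
    by (rule step_eq[OF C d, symmetric])
  finally show ?case .
qed

lemma upper_bound:
  fixes C :: "'x::finite \<Rightarrow> 'y::finite \<Rightarrow> real"
    and mX :: "'x \<Rightarrow> 'x pmf" and mY :: "'y \<Rightarrow> 'y pmf"
  assumes C: "\<And>x y. C x y \<ge> 0" and d: "0 \<le> \<delta>" "\<delta> \<le> 1"
  shows "\<epsilon> > 0 \<Longrightarrow> \<exists>K. (\<forall>t x y. K t (x, y) \<in> couplings (mX x) (mY y)) \<and>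
    (\<forall>\<pi>0. measure_pmf.expectation (path_law \<pi>0 K k) (cost \<delta> C k) \<le>
      measure_pmf.expectation \<pi>0 (\<lambda>s. Cdelta \<delta> mX mY C k (fst s) (snd s)) + \<epsilon>)"
proof (induction k arbitrary: \<epsilon>)
  case 0
  show ?case
    by (rule exI[where x="\<lambda>t s. pair_pmf (mX (fst s)) (mY (snd s))"])
       (use 0 in \<open>auto simp: cost_def couplings_pair\<close>)
next
  case (Suc k)
  have Cn: "\<And>l x y. 0 \<le> Cdelta \<delta> mX mY C l x y" by (rule Cdelta_nonneg) (use C d in auto)
  obtain K' where K': "\<forall>t x y. K' t (x, y) \<in> couplings (mX x) (mY y)"
    "\<And>\<pi>0. measure_pmf.expectation (path_law \<pi>0 K' k) (cost \<delta> C k) \<le>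
      measure_pmf.expectation \<pi>0 (\<lambda>s. Cdelta \<delta> mX mY C k (fst s) (snd s)) + \<epsilon> / 2"
    using Suc.IH[of "\<epsilon> / 2"] Suc.prems by auto
  have "\<exists>q. q \<in> couplings (mX (fst s)) (mY (snd s)) \<and>
     measure_pmf.expectation q (\<lambda>(x, y). Cdelta \<delta> mX mY C k x y)
       < dW (mX (fst s)) (mY (snd s)) (Cdelta \<delta> mX mY C k) + \<epsilon> / 2" for s :: "'x \<times> 'y"
  proof -
    have "dW (mX (fst s)) (mY (snd s)) (Cdelta \<delta> mX mY C k)
       < dW (mX (fst s)) (mY (snd s)) (Cdelta \<delta> mX mY C k) + \<epsilon> / 2" using Suc.prems by simp
    moreover have ne: "couplings (mX (fst s)) (mY (snd s)) \<noteq> {}" using couplings_pair by blast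
    ultimately show ?thesis
      unfolding dW_def[of "mX (fst s)"]
      by (subst (asm) cINF_less_iff[OF ne dW_bdd[OF Cn[of k]]]) auto
  qed
  then obtain q where q: "\<And>s. q s \<in> couplings (mX (fst s)) (mY (snd s))"
    "\<And>s. measure_pmf.expectation (q s) (\<lambda>(x, y). Cdelta \<delta> mX mY C k x y)
       < dW (mX (fst s)) (mY (snd s)) (Cdelta \<delta> mX mY C k) + \<epsilon> / 2"
    by metis
  define K where "K = (\<lambda>t. case t of 0 \<Rightarrow> q | Suc t' \<Rightarrow> K' t')"
  have K0: "K 0 = q" and KS: "(\<lambda>t. K (Suc t)) = K'" by (auto simp: K_def)
  have Kc: "\<forall>t x y. K t (x, y) \<in> couplings (mX x) (mY y)"
    using K' q by (auto simp: K_def split: nat.splits)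
  show ?case
  proof (rule exI[of _ K], rule conjI[OF Kc], intro allI)
    fix \<pi>0 :: "('x \<times> 'y) pmf"
    have "measure_pmf.expectation (path_law \<pi>0 K (Suc k)) (cost \<delta> C (Suc k))
      = measure_pmf.expectation \<pi>0 (\<lambda>s. \<delta> * C (fst s) (snd s) + (1 - \<delta>) *
        measure_pmf.expectation (path_law (q s) K' k) (cost \<delta> C k))"
      using step_eq[OF C d, of \<pi>0 K k] by (simp add: K0 KS)
    also have "\<dots> \<le> measure_pmf.expectation \<pi>0 (\<lambda>s. Cdelta \<delta> mX mY C (Suc k) (fst s) (snd s) + \<epsilon>)"
    proof (rule integral_mono[OF fin_integrable fin_integrable])
      fix s :: "'x \<times> 'y"
      have "measure_pmf.expectation (path_law (q s) K' k) (cost \<delta> C k)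
         \<le> measure_pmf.expectation (q s) (\<lambda>s. Cdelta \<delta> mX mY C k (fst s) (snd s)) + \<epsilon> / 2"
        by (rule K'(2))
      also have "\<dots> = measure_pmf.expectation (q s) (\<lambda>(x, y). Cdelta \<delta> mX mY C k x y) + \<epsilon> / 2"
        by (simp add: split_beta')
      also have "\<dots> \<le> dW (mX (fst s)) (mY (snd s)) (Cdelta \<delta> mX mY C k) + \<epsilon>"
        using q(2)[of s] by simp
      finally have "(1 - \<delta>) * measure_pmf.expectation (path_law (q s) K' k) (cost \<delta> C k)
          \<le> (1 - \<delta>) * (dW (mX (fst s)) (mY (snd s)) (Cdelta \<delta> mX mY C k) + \<epsilon>)"
        using d by (simp add: mult_left_mono)
      moreover have "(1 - \<delta>) * \<epsilon> \<le> \<epsilon>" using d Suc.prems by (simp add: mult_le_cancel_right1)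
      ultimately show "\<delta> * C (fst s) (snd s) + (1 - \<delta>) *
        measure_pmf.expectation (path_law (q s) K' k) (cost \<delta> C k)
        \<le> Cdelta \<delta> mX mY C (Suc k) (fst s) (snd s) + \<epsilon>"
        by (simp add: algebra_simps)
    qed
    also have "\<dots> = measure_pmf.expectation \<pi>0 (\<lambda>s. Cdelta \<delta> mX mY C (Suc k) (fst s) (snd s)) + \<epsilon>"
      by (simp add: fin_integrable)
    finally show "measure_pmf.expectation (path_law \<pi>0 K (Suc k)) (cost \<delta> C (Suc k))
      \<le> measure_pmf.expectation \<pi>0 (\<lambda>s. Cdelta \<delta> mX mY C (Suc k) (fst s) (snd s)) + \<epsilon>" .
  qed
qed


theorem proposition18:
  fixes mX :: "'x::finite \<Rightarrow> 'x pmf" and nuX :: "'x pmf"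
    and mY :: "'y::finite \<Rightarrow> 'y pmf" and nuY :: "'y pmf"
    and C :: "'x \<Rightarrow> 'y \<Rightarrow> real" and \<delta> :: real and k :: nat
  assumes "\<And>x y. C x y \<ge> 0"
    and "0 \<le> \<delta>" and "\<delta> \<le> 1"
  shows "dWL \<delta> k mX nuX mY nuY C = dW nuX nuY (Cdelta \<delta> mX mY C k)"
proof -
  note C = assms(1) and d = assms(2,3)
  have Cn: "\<And>l x y. 0 \<le> Cdelta \<delta> mX mY C l x y" by (rule Cdelta_nonneg) (use C d in auto)
  define F where "F = (\<lambda>c :: ('x \<times> 'y) pmf \<times> (nat \<Rightarrow> 'x \<times> 'y \<Rightarrow> ('x \<times> 'y) pmf).
     measure_pmf.expectation (path_law (fst c) (snd c) k) (cost \<delta> C k))"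
  have dWL_eq: "dWL \<delta> k mX nuX mY nuY C = (INF c \<in> markov_couplings mX nuX mY nuY. F c)"
    unfolding dWL_def F_def cost_def by simp
  have ne: "markov_couplings mX nuX mY nuY \<noteq> {}"
  proof -
    have "(pair_pmf nuX nuY, \<lambda>t s. pair_pmf (mX (fst s)) (mY (snd s))) \<in> markov_couplings mX nuX mY nuY"
      by (simp add: markov_couplings_def couplings_pair)
    then show ?thesis by blast
  qed
  have F_nonneg: "0 \<le> F c" for c
    unfolding F_def using cost_bounds[where C=C and \<delta>=\<delta>, OF C d]
    by (intro integral_nonneg_AE AE_I2) auto
  have bdd: "bdd_below (F ` markov_couplings mX nuX mY nuY)"
    using F_nonneg by (intro bdd_belowI[where m=0]) auto
  have exp_eq: "measure_pmf.expectation \<pi>0 (\<lambda>(x, y). Cdelta \<delta> mX mY C k x y)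
     = measure_pmf.expectation \<pi>0 (\<lambda>s. Cdelta \<delta> mX mY C k (fst s) (snd s))" for \<pi>0
    by (simp add: split_beta')
  show ?thesis
  proof (rule antisym)
    show "dWL \<delta> k mX nuX mY nuY C \<le> dW nuX nuY (Cdelta \<delta> mX mY C k)"
    proof (rule field_le_epsilon)
      fix e :: real assume e: "0 < e"
      obtain K where K: "\<forall>t x y. K t (x, y) \<in> couplings (mX x) (mY y)"
        "\<And>\<pi>0. measure_pmf.expectation (path_law \<pi>0 K k) (cost \<delta> C k) \<le>
      measure_pmf.expectation \<pi>0 (\<lambda>s. Cdelta \<delta> mX mY C k (fst s) (snd s)) + e"
        using upper_bound[where C=C and \<delta>=\<delta> and mX=mX and mY=mY and k=k, OF C d e] by blast
      have "dWL \<delta> k mX nuX mY nuY C - e \<le> dW nuX nuY (Cdelta \<delta> mX mY C k)"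
        unfolding dW_def
      proof (rule cINF_greatest)
        show "couplings nuX nuY \<noteq> {}" using couplings_pair by blast
      next
        fix \<pi>0 assume p: "\<pi>0 \<in> couplings nuX nuY"
        have "(\<pi>0, K) \<in> markov_couplings mX nuX mY nuY"
          using p K(1) by (simp add: markov_couplings_def)
        then have "dWL \<delta> k mX nuX mY nuY C \<le> F (\<pi>0, K)"
          unfolding dWL_eq by (rule cINF_lower[OF bdd])
        also have "\<dots> \<le> measure_pmf.expectation \<pi>0 (\<lambda>s. Cdelta \<delta> mX mY C k (fst s) (snd s)) + e"
          unfolding F_def using K(2) by simp
        finally show "dWL \<delta> k mX nuX mY nuY C - e
           \<le> measure_pmf.expectation \<pi>0 (\<lambda>(x, y). Cdelta \<delta> mX mY C k x y)"
          by (simp add: exp_eq)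
      qed
      then show "dWL \<delta> k mX nuX mY nuY C \<le> dW nuX nuY (Cdelta \<delta> mX mY C k) + e" by simp
    qed
  next
    show "dW nuX nuY (Cdelta \<delta> mX mY C k) \<le> dWL \<delta> k mX nuX mY nuY C"
      unfolding dWL_eq
    proof (rule cINF_greatest[OF ne])
      fix c assume c: "c \<in> markov_couplings mX nuX mY nuY"
      obtain \<pi>0 K where cc: "c = (\<pi>0, K)" by (cases c)
      have p: "\<pi>0 \<in> couplings nuX nuY" and K: "\<forall>t x y. K t (x, y) \<in> couplings (mX x) (mY y)"
        using c by (auto simp: cc markov_couplings_def)
      have "dW nuX nuY (Cdelta \<delta> mX mY C k)
          \<le> measure_pmf.expectation \<pi>0 (\<lambda>(x, y). Cdelta \<delta> mX mY C k x y)"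
        by (rule dW_le[OF Cn[of k] p])
      also have "\<dots> \<le> F c"
        unfolding exp_eq F_def cc using lower_bound[where C=C and \<delta>=\<delta> and mX=mX and mY=mY, OF C d K] by simp
      finally show "dW nuX nuY (Cdelta \<delta> mX mY C k) \<le> F c" .
    qed
  qed
qed

end
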